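(* Let $\mathcal A=(Q,\Sigma,\delta,\rho)$ be a connected bireversible Mealy automaton whose labeled orbit tree $\mathfrak t(\mathcal A)$ has no active self-liftable branch, and let $\mathfrak j$ be a jungle tree of $\mathfrak t(\mathcal A)$. Then the relation $\sim$ on the set of stems of $\mathfrak j$ is an equivalence relation.
   Context: Mealy automata. A Mealy automaton is $\mathcal A=(Q,\Sigma,\delta,\rho)$ with $Q,\Sigma$ finite non-empty sets, $\delta=(\delta_i\colon Q\to Q)_{i\in\Sigma}$, $\rho=(\rho_x\colon\Sigma\to\Sigma)_{x\in Q}$; transitions $x\xrightarrow{i\mid\rho_x(i)}\delta_i(x)$. Invertible: each $\rho_x$ a permutation of $\Sigma$; reversible: each $\delta_i$ a permutation of $Q$; bireversible: invertible, reversible, and for each $j\in\Sigma$ the map $x\mapsto\delta_{\rho_x^{-1}(j)}(x)$ is a permutation of $Q$. Connected: the directed graph on $Q$ with edges $x\to\delta_i(x)$ is connected. Extensions: $\rho_x(i\mathbf s)=\rho_x(i)\rho_{\delta_i(x)}(\mathbf s)$ on $\Sigma^*$; $\rho_{x_1\cdots x_m}=\rho_{x_m}\circ\cdots\circ\rho_{x_1}$ (and $\rho$ of the empty word is the identity); dually $\delta_i(x\mathbf u)=\delta_i(x)\delta_{\rho_x(i)}(\mathbf u)$ on $Q^*$, $\delta_{i_1\cdots i_m}=\delta_{i_m}\circ\cdots\circ\delta_{i_1}$. The connected components of the $n$-th power $\mathcal A^n$ (stateset $Q^n$, transitions $\mathbf u\xrightarrow{i\mid\rho_{\mathbf u}(i)}\delta_i(\mathbf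 u)$) are, for reversible $\mathcal A$, the orbits of $Q^n$ under the maps $\delta_{\mathbf s}$. Orbit tree $\mathfrak t(\mathcal A)$: vertices at level $n\ge0$ are the connected components of $\mathcal A^n$; an edge from the component of $\mathbf u\in Q^n$ to that of $\mathbf ux$ for all $\mathbf u,x$; edge $C\to D$ labeled $\#D/\#C$. $\top,\bot$ = first/last vertex of a downward path; level of an edge/path = level of its top vertex. A word of $Q^*\cup Q^\omega$ represents the initial path through the components of its prefixes. Edge $e$ is liftable to $f$ if every word of $\bot(e)$ has a suffix in $\bot(f)$; paths $(e_i)_{i\in I}$, $(f_i)_{i\in I}$: liftable if each $e_i$ is liftable to $f_i$. $f$ is a legitimate child of $e$ if $\top(f)=\bot(e)$ and $f$ is liftable to $e$. A path/subtree $\mathfrak s$ is $k$-self-liftable if for all $i\ge0$ every path in $\mathfrak s$ starting at level $i+k$ is liftable to a path in $\mathfrak s$ starting at level $i$; self-liftable if $k$-self-liftable for some $k>0$. A branch (infinite initial path) is active if its labels are not eventually all $1$. Jungle trees: for a finite 1-self-liftable initial path $\mathbf e$ of length $n$ whose last edge has at least two legitimate children, all labeled $1$, $\mathfrak j(\mathbf e)$ consists of $\mathbf e$ plus all edges descending from $\bot(\mathbf e)$ that are liftable to the last edge of $\mathbf e$. Stems: the words of $\bot(\mathbf e)\subseteq Q^n$. A $\mathfrak j$-word is a word representing an initial path of $\mathfrak j$. For stems $\mathbf u,\mathbf v$: $\mathbf u\sim\mathbf v$ iff there is $\mathbf s\in Q^*$ such that $\mathbf{usv}$ is a $\mathfrak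 j$-word and $\rho_{\mathbf{us}}$ is the identity of $\Sigma^*$. *)

theory Defs
  imports Complex_Main
begin

text \<open>A Mealy automaton with finite non-empty stateset 'q and alphabet 's is given by
  delta :: 's => 'q => 'q (delta i = the map delta_i) and rho :: 'q => 's => 's
  (rho x = the map rho_x).  Transition: x --i|rho x i--> delta i x.\<close>

definition invertible :: "('s \<Rightarrow> 'q \<Rightarrow> 'q) \<Rightarrow> ('q \<Rightarrow> 's \<Rightarrow> 's) \<Rightarrow> bool" where
  "invertible delta rho \<longleftrightarrow> (\<forall>x. bij (rho x))"

definition reversible :: "('s \<Rightarrow> 'q \<Rightarrow> 'q) \<Rightarrow> ('q \<Rightarrow> 's \<Rightarrow> 's) \<Rightarrow> bool" where
  "reversible delta rho \<longleftrightarrow> (\<forall>i. bij (delta i))"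

definition bireversible :: "('s \<Rightarrow> 'q \<Rightarrow> 'q) \<Rightarrow> ('q \<Rightarrow> 's \<Rightarrow> 's) \<Rightarrow> bool" where
  "bireversible delta rho \<longleftrightarrow> invertible delta rho \<and> reversible delta rho \<and>
     (\<forall>j. bij (\<lambda>x. delta (inv (rho x) j) x))"

definition connected_aut :: "('s \<Rightarrow> 'q \<Rightarrow> 'q) \<Rightarrow> ('q \<Rightarrow> 's \<Rightarrow> 's) \<Rightarrow> bool" where
  "connected_aut delta rho \<longleftrightarrow>
     (let E = {(x, delta i x) | x i. True} in \<forall>x y. (x, y) \<in> (E \<union> E\<inverse>)\<^sup>*)"

fun rho1 :: "('s \<Rightarrow> 'q \<Rightarrow> 'q) \<Rightarrow> ('q \<Rightarrow> 's \<Rightarrow> 's) \<Rightarrow> 'q \<Rightarrow> 's list \<Rightarrow> 's list" where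
  "rho1 delta rho x [] = []"
| "rho1 delta rho x (i # s) = rho x i # rho1 delta rho (delta i x) s"

fun rhoW :: "('s \<Rightarrow> 'q \<Rightarrow> 'q) \<Rightarrow> ('q \<Rightarrow> 's \<Rightarrow> 's) \<Rightarrow> 'q list \<Rightarrow> 's list \<Rightarrow> 's list" where
  "rhoW delta rho [] s = s"
| "rhoW delta rho (x # u) s = rhoW delta rho u (rho1 delta rho x s)"

fun delta1 :: "('s \<Rightarrow> 'q \<Rightarrow> 'q) \<Rightarrow> ('q \<Rightarrow> 's \<Rightarrow> 's) \<Rightarrow> 's \<Rightarrow> 'q list \<Rightarrow> 'q list" where
  "delta1 delta rho i [] = []"
| "delta1 delta rho i (x # u) = delta i x # delta1 delta rho (rho x i) u"

text \<open>Transition relation of the powers A^n (all n at once): u --> delta_i(u).\<close>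
definition pow_step :: "('s \<Rightarrow> 'q \<Rightarrow> 'q) \<Rightarrow> ('q \<Rightarrow> 's \<Rightarrow> 's) \<Rightarrow> ('q list \<times> 'q list) set" where
  "pow_step delta rho = {(u, delta1 delta rho i u) | u i. True}"

text \<open>Connected component of u in A^(length u) (components of the underlying
  undirected graph; transitions preserve length).\<close>
definition comp :: "('s \<Rightarrow> 'q \<Rightarrow> 'q) \<Rightarrow> ('q \<Rightarrow> 's \<Rightarrow> 's) \<Rightarrow> 'q list \<Rightarrow> 'q list set" where
  "comp delta rho u = {v. (u, v) \<in> (pow_step delta rho \<union> (pow_step delta rho)\<inverse>)\<^sup>*}"

text \<open>Edges of the orbit tree: from the component of u to the component of u x.
  An edge is represented by the pair (top vertex, bottom vertex).\<close>
definition tree_edge :: "('s \<Rightarrow> 'q \<Rightarrow> 'q) \<Rightarrow> ('q \<Rightarrow> 's \<Rightarrow> 's) \<Rightarrow> 'q list set \<Rightarrow> 'q list set \<Rightarrow> bool" where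
  "tree_edge delta rho C D \<longleftrightarrow> (\<exists>u x. C = comp delta rho u \<and> D = comp delta rho (u @ [x]))"

definition label :: "'q list set \<times> 'q list set \<Rightarrow> rat" where
  "label e = of_nat (card (snd e)) / of_nat (card (fst e))"

definition liftable :: "'q list set \<times> 'q list set \<Rightarrow> 'q list set \<times> 'q list set \<Rightarrow> bool" where
  "liftable e f \<longleftrightarrow> (\<forall>w \<in> snd e. \<exists>a v. w = a @ v \<and> v \<in> snd f)"

text \<open>Initial paths are given by their vertex sequences p 0, p 1, ... (p j at level j).
  A finite initial path of length n (n edges):\<close>
definition init_path :: "('s \<Rightarrow> 'q \<Rightarrow> 'q) \<Rightarrow> ('q \<Rightarrow> 's \<Rightarrow> 's) \<Rightarrow> (nat \<Rightarrow> 'q list set) \<Rightarrow> nat \<Rightarrow> bool" where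
  "init_path delta rho p n \<longleftrightarrow> p 0 = comp delta rho [] \<and>
     (\<forall>j < n. tree_edge delta rho (p j) (p (Suc j)))"

definition branch :: "('s \<Rightarrow> 'q \<Rightarrow> 'q) \<Rightarrow> ('q \<Rightarrow> 's \<Rightarrow> 's) \<Rightarrow> (nat \<Rightarrow> 'q list set) \<Rightarrow> bool" where
  "branch delta rho p \<longleftrightarrow> p 0 = comp delta rho [] \<and>
     (\<forall>j. tree_edge delta rho (p j) (p (Suc j)))"

definition self_liftable_fin :: "nat \<Rightarrow> (nat \<Rightarrow> 'q list set) \<Rightarrow> nat \<Rightarrow> bool" where
  "self_liftable_fin k p n \<longleftrightarrow>
     (\<forall>i m. i + k + m \<le> n \<longrightarrow>
        (\<forall>t < m. liftable (p (i + k + t), p (Suc (i + k + t))) (p (i + t), p (Suc (i + t)))))"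

definition self_liftable_branch_k :: "nat \<Rightarrow> (nat \<Rightarrow> 'q list set) \<Rightarrow> bool" where
  "self_liftable_branch_k k p \<longleftrightarrow>
     (\<forall>i. (\<forall>m. \<forall>t < m. liftable (p (i + k + t), p (Suc (i + k + t))) (p (i + t), p (Suc (i + t))))
        \<and> (\<forall>t. liftable (p (i + k + t), p (Suc (i + k + t))) (p (i + t), p (Suc (i + t)))))"

definition self_liftable_branch :: "(nat \<Rightarrow> 'q list set) \<Rightarrow> bool" where
  "self_liftable_branch p \<longleftrightarrow> (\<exists>k > 0. self_liftable_branch_k k p)"

definition active :: "(nat \<Rightarrow> 'q list set) \<Rightarrow> bool" where
  "active p \<longleftrightarrow> \<not> (\<exists>N. \<forall>j \<ge> N. label (p j, p (Suc j)) = 1)"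

definition no_active_self_liftable_branch ::
  "('s \<Rightarrow> 'q \<Rightarrow> 'q) \<Rightarrow> ('q \<Rightarrow> 's \<Rightarrow> 's) \<Rightarrow> bool" where
  "no_active_self_liftable_branch delta rho \<longleftrightarrow>
     \<not> (\<exists>p. branch delta rho p \<and> active p \<and> self_liftable_branch p)"

definition legit_child ::
  "('s \<Rightarrow> 'q \<Rightarrow> 'q) \<Rightarrow> ('q \<Rightarrow> 's \<Rightarrow> 's) \<Rightarrow> 'q list set \<times> 'q list set \<Rightarrow> 'q list set \<times> 'q list set \<Rightarrow> bool" where
  "legit_child delta rho e f \<longleftrightarrow>
     tree_edge delta rho (fst f) (snd f) \<and> fst f = snd e \<and> liftable f e"

definition jungle_path :: "('s \<Rightarrow> 'q \<Rightarrow> 'q) \<Rightarrow> ('q \<Rightarrow> 's \<Rightarrow> 's) \<Rightarrow> (nat \<Rightarrow> 'q list set) \<Rightarrow> nat \<Rightarrow> bool" where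
  "jungle_path delta rho p n \<longleftrightarrow> 0 < n \<and> init_path delta rho p n \<and> self_liftable_fin 1 p n \<and>
     (let e = (p (n - 1), p n) in
       (\<exists>f g. f \<noteq> g \<and> legit_child delta rho e f \<and> legit_child delta rho e g) \<and>
       (\<forall>f. legit_child delta rho e f \<longrightarrow> label f = 1))"

definition jungle_edges ::
  "('s \<Rightarrow> 'q \<Rightarrow> 'q) \<Rightarrow> ('q \<Rightarrow> 's \<Rightarrow> 's) \<Rightarrow> (nat \<Rightarrow> 'q list set) \<Rightarrow> nat \<Rightarrow> ('q list set \<times> 'q list set) set" where
  "jungle_edges delta rho p n =
     {(p j, p (Suc j)) | j. j < n} \<union>
     {(C, D). tree_edge delta rho C D \<and>
        (p n, C) \<in> {(A, B). tree_edge delta rho A B}\<^sup>* \<and>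
        liftable (C, D) (p (n - 1), p n)}"

definition jungle_word ::
  "('s \<Rightarrow> 'q \<Rightarrow> 'q) \<Rightarrow> ('q \<Rightarrow> 's \<Rightarrow> 's) \<Rightarrow> (nat \<Rightarrow> 'q list set) \<Rightarrow> nat \<Rightarrow> 'q list \<Rightarrow> bool" where
  "jungle_word delta rho p n w \<longleftrightarrow>
     (\<forall>k < length w. (comp delta rho (take k w), comp delta rho (take (Suc k) w))
                        \<in> jungle_edges delta rho p n)"

definition stems :: "(nat \<Rightarrow> 'q list set) \<Rightarrow> nat \<Rightarrow> 'q list set" where
  "stems p n = p n"

definition jungle_sim ::
  "('s \<Rightarrow> 'q \<Rightarrow> 'q) \<Rightarrow> ('q \<Rightarrow> 's \<Rightarrow> 's) \<Rightarrow> (nat \<Rightarrow> 'q list set) \<Rightarrow> nat \<Rightarrow> 'q list \<Rightarrow> 'q list \<Rightarrow> bool" where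
  "jungle_sim delta rho p n u v \<longleftrightarrow>
     (\<exists>s. jungle_word delta rho p n (u @ s @ v) \<and> (\<forall>t. rhoW delta rho (u @ s) t = t))"

end

theory Submission
  imports Defs "HOL-Library.FuncSet"
begin



fun lt :: "('q \<Rightarrow> 's \<Rightarrow> 's) \<Rightarrow> 'q list \<Rightarrow> 's \<Rightarrow> 's" where
  "lt rho [] i = i"
| "lt rho (x # u) i = lt rho u (rho x i)"

definition cp :: "nat \<Rightarrow> 'a list \<Rightarrow> 'a list" where
  "cp k c = concat (replicate k c)"

lemma cp_add: "cp (a + b) c = cp a c @ cp b c"
  by (simp add: cp_def replicate_add)

lemma cp_Suc: "cp (Suc k) c = c @ cp k c"
  by (simp add: cp_def)

lemma cp_0[simp]: "cp 0 c = []" by (simp add: cp_def)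

lemma length_cp[simp]: "length (cp k c) = k * length c"
  by (induct k) (auto simp: cp_Suc)

lemma length_delta1[simp]: "length (delta1 d r i u) = length u"
  by (induct u arbitrary: i) auto

lemma delta1_append: "delta1 d r i (a @ b) = delta1 d r i a @ delta1 d r (lt r a i) b"
  by (induct a arbitrary: i) auto

lemma take_delta1: "take k (delta1 d r i u) = delta1 d r i (take k u)"
proof -
  have "delta1 d r i u = delta1 d r i (take k u @ drop k u)" by simp
  also have "\<dots> = delta1 d r i (take k u) @ delta1 d r (lt r (take k u) i) (drop k u)"
    by (rule delta1_append)
  finally show ?thesis by (cases "k \<le> length u") auto
qed

lemma drop_delta1: "drop k (delta1 d r i u) = delta1 d r (lt r (take k u) i) (drop k u)"
proof -
  have "delta1 d r i u = delta1 d r i (take k u @ drop k u)" by simp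
  also have "\<dots> = delta1 d r i (take k u) @ delta1 d r (lt r (take k u) i) (drop k u)"
    by (rule delta1_append)
  finally show ?thesis by (cases "k \<le> length u") auto
qed

lemma rhoW_append: "rhoW d r (a @ b) t = rhoW d r b (rhoW d r a t)"
  by (induct a arbitrary: t) auto

lemma rho1_Nil[simp]: "rho1 d r x [] = []" by simp

lemma rhoW_Nil[simp]: "rhoW d r b [] = []"
  by (induct b) auto

lemma rhoW_Cons: "rhoW d r b (s # t) = lt r b s # rhoW d r (delta1 d r s b) t"
  by (induct b arbitrary: s t) auto

lemma surj_rho1:
  assumes "\<forall>x. bij (r x)"
  shows "\<exists>s. rho1 d r x s = t"
proof (induct t arbitrary: x)
  case Nil then show ?case by (intro exI[of _ "[]"]) simp
next
  case (Cons j t)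
  define i where "i = inv (r x) j"
  have "r x i = j" using assms unfolding i_def by (meson bij_inv_eq_iff)
  obtain s where "rho1 d r (d i x) s = t" using Cons by blast
  then show ?case using \<open>r x i = j\<close> by (intro exI[of _ "i # s"]) simp
qed

lemma surj_rhoW:
  assumes "\<forall>x. bij (r x)"
  shows "\<exists>s. rhoW d r a s = t"
proof (induct a arbitrary: t)
  case Nil then show ?case by simp
next
  case (Cons x a)
  obtain s where s: "rhoW d r a s = t" using Cons by blast
  obtain s' where "rho1 d r x s' = s" using surj_rho1[OF assms] by blast
  then show ?case using s by (intro exI[of _ s']) simp
qed

lemma bij_lt:
  assumes "\<forall>x. bij (r x)"
  shows "bij (lt r a)"
proof (induct a)
  case Nil
  have "lt r [] = id" by (rule ext) simp
  then show ?case by (metis bij_id)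
next
  case (Cons x a)
  have "lt r (x # a) = lt r a \<circ> r x" by (rule ext) simp
  then show ?case using Cons assms bij_comp by metis
qed

lemma inj_delta1:
  assumes "\<forall>i. bij (d i)"
  shows "inj (delta1 d r i)"
proof -
  have "\<forall>i v. delta1 d r i u = delta1 d r i v \<longrightarrow> u = v" for u
  proof (induct u)
    case Nil then show ?case by (metis delta1.simps(1) length_0_conv length_delta1)
  next
    case (Cons x u)
    show ?case
    proof (intro allI impI)
      fix i v assume h: "delta1 d r i (x # u) = delta1 d r i v"
      then obtain y w where v: "v = y # w" by (cases v) auto
      from h v have "d i x = d i y" by simp
      then have "x = y" using assms by (meson bij_def injD)
      with h v Cons show "x # u = v" by auto
    qed
  qed
  then show ?thesis by (auto intro: injI)
qed

lemma finite_orbit_return: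
  assumes "inj f" "finite S" "f ` S \<subseteq> S" "x \<in> S"
  shows "\<exists>k>0. (f ^^ k) x = x"
proof -
  have inS: "(f ^^ k) x \<in> S" for k
    by (induct k) (use assms in auto)
  have "\<not> inj (\<lambda>k. (f ^^ k) x)"
  proof
    assume "inj (\<lambda>k. (f ^^ k) x)"
    moreover have "range (\<lambda>k. (f ^^ k) x) \<subseteq> S" using inS by auto
    ultimately have "finite (UNIV :: nat set)"
      using assms(2) by (meson finite_imageD finite_subset)
    then show False by simp
  qed
  then obtain i j where ij: "i \<noteq> j" "(f ^^ i) x = (f ^^ j) x" unfolding inj_def by blast
  have main: "i < j \<Longrightarrow> (f ^^ i) x = (f ^^ j) x \<Longrightarrow> \<exists>k>0. (f ^^ k) x = x" for i j
  proof -
    assume "i < j" "(f ^^ i) x = (f ^^ j) x"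
    then have "(f ^^ i) x = (f ^^ i) ((f ^^ (j - i)) x)"
      by (metis funpow_add le_add_diff_inverse less_imp_le o_apply)
    then have "x = (f ^^ (j - i)) x" using inj_fn[OF assms(1)] by (meson injD)
    then show ?thesis using \<open>i < j\<close> by (intro exI[of _ "j - i"]) auto
  qed
  show ?thesis using ij main by (metis linorder_neq_iff)
qed




locale aut =
  fixes delta :: "'s::finite \<Rightarrow> 'q::finite \<Rightarrow> 'q" and rho :: "'q \<Rightarrow> 's \<Rightarrow> 's"
  assumes invt: "\<forall>x. bij (rho x)" and revs: "\<forall>i. bij (delta i)"
begin

abbreviation "S \<equiv> pow_step delta rho"
abbreviation "cmp \<equiv> comp delta rho"
abbreviation "d1 \<equiv> delta1 delta rho"

lemma S_iff: "(u, v) \<in> S \<longleftrightarrow> (\<exists>i. v = d1 i u)"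
  unfolding pow_step_def by auto

lemma S_back: assumes "(u, v) \<in> S" shows "(v, u) \<in> S\<^sup>*"
proof -
  obtain i where v: "v = d1 i u" using assms unfolding S_iff by blast
  let ?f = "d1 i"
  have "inj ?f" by (rule inj_delta1[OF revs])
  moreover have "finite {w :: 'q list. length w = length u}"
    using finite_lists_length_eq[of "UNIV :: 'q set"] by simp
  moreover have "?f ` {w. length w = length u} \<subseteq> {w. length w = length u}" by (auto simp: length_delta1)
  ultimately obtain k where k: "k > 0" "(?f ^^ k) u = u"
    using finite_orbit_return[of ?f "{w. length w = length u}" u] by blast
  have reach: "(w, (?f ^^ m) w) \<in> S\<^sup>*" for w m
  proof (induct m)
    case 0 then show ?case by simp
  next
    case (Suc m)
    have "((?f ^^ m) w, ?f ((?f ^^ m) w)) \<in> S" unfolding S_iff by blast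
    then have "((?f ^^ m) w, (?f ^^ Suc m) w) \<in> S" by simp
    with Suc show ?case by (meson rtrancl_into_rtrancl)
  qed
  obtain k' where k': "k = Suc k'" using k(1) gr0_implies_Suc by blast
  have "(?f ^^ k') v = (?f ^^ k) u" unfolding k' v funpow_Suc_right comp_def by (simp only: comp_apply)
  then have "(?f ^^ k') v = u" using k(2) by simp
  then show ?thesis using reach[of v k'] by simp
qed

lemma comp_eq: "cmp u = {v. (u, v) \<in> S\<^sup>*}"
proof -
  have "(S \<union> S\<inverse>)\<^sup>* = S\<^sup>*"
  proof
    have "S \<union> S\<inverse> \<subseteq> S\<^sup>*" using S_back by auto
    then have "(S \<union> S\<inverse>)\<^sup>* \<subseteq> (S\<^sup>*)\<^sup>*" by (rule rtrancl_mono)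
    then show "(S \<union> S\<inverse>)\<^sup>* \<subseteq> S\<^sup>*" by simp
  next
    show "S\<^sup>* \<subseteq> (S \<union> S\<inverse>)\<^sup>*" by (rule rtrancl_mono) auto
  qed
  then show ?thesis unfolding comp_def by simp
qed

lemma comp_refl[simp]: "u \<in> cmp u"
  by (simp add: comp_eq)

lemma comp_step: "v \<in> cmp u \<Longrightarrow> d1 i v \<in> cmp u"
  unfolding comp_eq using S_iff by (auto intro: rtrancl_into_rtrancl)

lemma comp_sym: assumes "v \<in> cmp u" shows "cmp v = cmp u"
proof -
  let ?E = "S \<union> S\<inverse>"
  have uv: "(u, v) \<in> ?E\<^sup>*" using assms unfolding comp_def by simp
  have "(v, u) \<in> ?E\<^sup>*"
  proof -
    have "(v, u) \<in> (?E\<inverse>)\<^sup>*" using uv by (simp add: rtrancl_converse)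
    moreover have "?E\<inverse> = ?E" by auto
    ultimately show ?thesis by simp
  qed
  then show ?thesis using uv unfolding comp_def by (blast intro: rtrancl_trans)
qed

lemma comp_same: "w \<in> cmp u \<Longrightarrow> w \<in> cmp v \<Longrightarrow> cmp u = cmp v"
  using comp_sym by metis

lemma comp_induct[consumes 1, case_names base step]:
  assumes "v \<in> cmp u" "P u" "\<And>w i. w \<in> cmp u \<Longrightarrow> P w \<Longrightarrow> P (d1 i w)"
  shows "P v"
proof -
  have "(u, v) \<in> S\<^sup>*" using assms(1) comp_eq by auto
  then show ?thesis
  proof (induct rule: rtrancl_induct)
    case base then show ?case using assms by simp
  next
    case (step y z)
    then obtain i where "z = d1 i y" using S_iff by auto
    moreover have "y \<in> cmp u" using step comp_eq by auto
    ultimately show ?case using assms(3) step by simp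
  qed
qed

lemma comp_length: "v \<in> cmp u \<Longrightarrow> length v = length u"
proof (induct rule: comp_induct)
  case base then show ?case by (rule refl)
next
  case (step w i) then show ?case by (simp only: length_delta1)
qed

lemma comp_finite: "finite (cmp u)"
proof -
  have "cmp u \<subseteq> {w. set w \<subseteq> UNIV \<and> length w = length u}"
  proof
    fix x assume "x \<in> cmp u" then have "length x = length u" by (rule comp_length)
    then show "x \<in> {w. set w \<subseteq> UNIV \<and> length w = length u}" by simp
  qed
  then show ?thesis using finite_lists_length_eq[of "UNIV :: 'q set"] by (rule finite_subset) simp
qed

lemma comp_card_pos: "card (cmp u) > 0"
proof -
  have "cmp u \<noteq> {}" using comp_refl by blast
  then show ?thesis using comp_finite by (simp add: card_gt_0_iff)
qed

lemma comp_take: "v \<in> cmp u \<Longrightarrow> take k v \<in> cmp (take k u)"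
proof (induct rule: comp_induct)
  case base then show ?case by (rule comp_refl)
next
  case (step w i) then show ?case unfolding take_delta1 using comp_step by blast
qed

lemma comp_drop: "v \<in> cmp u \<Longrightarrow> drop k v \<in> cmp (drop k u)"
proof (induct rule: comp_induct)
  case base then show ?case by (rule comp_refl)
next
  case (step w i) then show ?case unfolding drop_delta1 using comp_step by blast
qed

lemma comp_take_surj: "y \<in> cmp (take k u) \<Longrightarrow> \<exists>b\<in>cmp u. take k b = y"
proof (induct rule: comp_induct)
  case base then show ?case using comp_refl by blast
next
  case (step w i)
  then obtain b where b: "b \<in> cmp u" "take k b = w" by blast
  have "d1 i b \<in> cmp u" using b(1) by (rule comp_step)
  moreover have "take k (d1 i b) = d1 i w" using b(2) by (simp only: take_delta1)
  ultimately show ?case by blast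
qed

lemma comp_drop_surj: "y \<in> cmp (drop k u) \<Longrightarrow> \<exists>b\<in>cmp u. drop k b = y"
proof (induct rule: comp_induct)
  case base then show ?case using comp_refl by blast
next
  case (step w i)
  then obtain b where b: "b \<in> cmp u" "drop k b = w" by blast
  define j where "j = inv (lt rho (take k b)) i"
  have bl: "bij (lt rho (take k b))" using invt by (rule bij_lt)
  have j: "lt rho (take k b) j = i" unfolding j_def using bl by (meson bij_inv_eq_iff)
  have "d1 j b \<in> cmp u" using b(1) by (rule comp_step)
  moreover have "drop k (d1 j b) = d1 i w" using b(2) j by (simp only: drop_delta1)
  ultimately show ?case by blast
qed

end



definition pr :: "'a list \<Rightarrow> nat \<Rightarrow> 'a list" where
  "pr c j = take j (cp (Suc j) c)"

lemma cp_take_indep: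
  assumes "j \<le> m * length c" shows "take j (cp (m + k) c) = take j (cp m c)"
  using assms by (simp add: cp_add)

lemma len_ge: assumes "c \<noteq> []" shows "m \<le> m * length c"
proof -
  have "1 \<le> length c" using assms by (cases c) simp_all
  then show ?thesis using mult_le_mono2[of 1 "length c" m] by simp
qed

lemma pr_0[simp]: "pr c 0 = []" by (simp add: pr_def)

lemma pr_Suc:
  assumes "c \<noteq> []" shows "pr c (Suc j) = pr c j @ [cp (Suc (Suc j)) c ! j]"
proof -
  let ?X = "cp (Suc (Suc j)) c"
  have L: "Suc j \<le> Suc j * length c" using len_ge[OF assms] .
  have L2: "Suc (Suc j) \<le> Suc (Suc j) * length c" using len_ge[OF assms] .
  have "j < length ?X" using L2 by simp
  then have "take (Suc j) ?X = take j ?X @ [?X ! j]" by (rule take_Suc_conv_app_nth)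
  moreover have "take j ?X = take j (cp (Suc j) c)"
    using cp_take_indep[of j "Suc j" c 1] L by simp
  ultimately show ?thesis unfolding pr_def by simp
qed

lemma pr_drop:
  assumes "c \<noteq> []" shows "drop (length c) (pr c (m + length c)) = pr c m"
proof -
  let ?L = "length c"
  have "cp (Suc (m + ?L)) c = c @ cp (m + ?L) c" by (rule cp_Suc)
  then have "drop ?L (pr c (m + ?L)) = take m (cp (m + ?L) c)"
    unfolding pr_def by (simp add: drop_take)
  also have "take m (cp (m + ?L) c) = take m (cp (Suc m) c)"
  proof -
    have e: "m + ?L = Suc m + (?L - 1)" using assms by (cases c) simp_all
    have "take m (cp (Suc m + (?L - 1)) c) = take m (cp (Suc m) c)"
    proof (rule cp_take_indep)
      show "m \<le> Suc m * length c" using len_ge[OF assms, of "Suc m"] by simp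
    qed
    then show ?thesis by (simp only: e)
  qed
  finally show ?thesis unfolding pr_def .
qed

lemma pr_cp:
  assumes "c \<noteq> []" shows "pr c (k * length c) = cp k c"
proof -
  have k: "k \<le> k * length c" by (rule len_ge[OF assms])
  then have "Suc (k * length c) = k + (Suc (k * length c) - k)" by linarith
  then have "pr c (k * length c) = take (k * length c) (cp (k + (Suc (k * length c) - k)) c)"
    unfolding pr_def by simp
  also have "\<dots> = take (k * length c) (cp k c)" by (rule cp_take_indep) simp
  finally show ?thesis by simp
qed




context aut begin

lemma label_one: "label (A, B) = 1 \<Longrightarrow> card A > 0 \<Longrightarrow> card B = card A"
  unfolding label_def by (simp add: divide_eq_1_iff)

lemma per:
  assumes noact: "no_active_self_liftable_branch delta rho" and cne: "c \<noteq> []"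
  shows "\<exists>d>0. \<forall>t. rhoW delta rho (cp d c) t = t"
proof -
  let ?L = "length c"
  define p' where "p' = (\<lambda>j. cmp (pr c j))"
  have br: "branch delta rho p'"
    unfolding branch_def tree_edge_def p'_def
  proof (intro conjI allI)
    show "cmp (pr c 0) = cmp []" by simp
    fix j
    show "\<exists>u x. cmp (pr c j) = cmp u \<and> cmp (pr c (Suc j)) = cmp (u @ [x])"
      by (rule exI[of _ "pr c j"], rule exI[of _ "cp (Suc (Suc j)) c ! j"]) (simp only: pr_Suc[OF cne] simp_thms)
  qed
  have lift: "liftable (p' (i + ?L + t), p' (Suc (i + ?L + t))) (p' (i + t), p' (Suc (i + t)))" for i t
    unfolding liftable_def p'_def snd_conv
  proof
    fix w assume w: "w \<in> cmp (pr c (Suc (i + ?L + t)))"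
    have e: "Suc (i + ?L + t) = Suc (i + t) + ?L" by simp
    have "drop ?L w \<in> cmp (drop ?L (pr c (Suc (i + ?L + t))))" using w by (rule comp_drop)
    then have "drop ?L w \<in> cmp (pr c (Suc (i + t)))" unfolding e pr_drop[OF cne] .
    moreover have "w = take ?L w @ drop ?L w" by simp
    ultimately show "\<exists>a v. w = a @ v \<and> v \<in> cmp (pr c (Suc (i + t)))" by blast
  qed
  have sl: "self_liftable_branch p'"
    unfolding self_liftable_branch_def self_liftable_branch_k_def
  proof (rule exI[of _ ?L], intro conjI allI impI)
    show "0 < ?L" using cne by simp
  next
    fix i m t show "liftable (p' (i + ?L + t), p' (Suc (i + ?L + t))) (p' (i + t), p' (Suc (i + t)))"
      by (rule lift)
  next
    fix i t show "liftable (p' (i + ?L + t), p' (Suc (i + ?L + t))) (p' (i + t), p' (Suc (i + t)))"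
      by (rule lift)
  qed
  have "\<not> (branch delta rho p' \<and> active p' \<and> self_liftable_branch p')"
    using noact unfolding no_active_self_liftable_branch_def by (rule contrapos_nn) (rule exI)
  then have "\<not> active p'" using br sl by (simp only: simp_thms)
  then obtain N where N: "\<forall>j\<ge>N. label (p' j, p' (Suc j)) = 1" unfolding active_def not_not by (elim exE)
  have cardN: "card (p' j) = card (p' N)" if "j \<ge> N" for j
    using that
  proof (induct j rule: dec_induct)
    case base then show ?case by (rule refl)
  next
    case (step j)
    have pos: "card (p' j) > 0" unfolding p'_def by (rule comp_card_pos)
    have "card (p' (Suc j)) = card (p' j)"
      using label_one[OF N[rule_format, OF step(1)] pos] .
    then show ?case using step(3) by (rule trans)
  qed
  define K where "K = N"
  define A where "A = cmp (cp K c)"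
  define B where "B = (\<lambda>r. cmp (cp (K + r) c))"
  have pB: "B r = p' ((K + r) * ?L)" for r unfolding B_def p'_def pr_cp[OF cne] ..
  have pA: "A = p' (K * ?L)" unfolding A_def p'_def pr_cp[OF cne] ..
  have cardB: "card (B r) = card A" for r
  proof -
    have "N \<le> (K + r) * ?L" using len_ge[OF cne, of "K + r"] unfolding K_def by linarith
    moreover have "N \<le> K * ?L" using len_ge[OF cne, of "K"] unfolding K_def by simp
    ultimately show ?thesis unfolding pA pB using cardN by (metis (no_types))
  qed
  have cpKr: "cp (K + r) c = cp r c @ cp K c" for r
  proof -
    have "cp (K + r) c = cp (r + K) c" by (simp only: add.commute)
    then show ?thesis by (simp only: cp_add)
  qed
  have dKr: "drop (r * ?L) (cp (K + r) c) = cp K c" for r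
    unfolding cpKr by simp
  have dropB: "drop (r * ?L) b \<in> A" if "b \<in> B r" for r b
  proof -
    have "drop (r * ?L) b \<in> cmp (drop (r * ?L) (cp (K + r) c))"
      using that unfolding B_def by (rule comp_drop)
    then show ?thesis unfolding A_def dKr .
  qed
  have imB: "(drop (r * ?L)) ` B r = A" for r
  proof
    show "drop (r * ?L) ` B r \<subseteq> A" using dropB by (rule image_subsetI)
    show "A \<subseteq> drop (r * ?L) ` B r"
    proof
      fix a assume "a \<in> A"
      then have "a \<in> cmp (drop (r * ?L) (cp (K + r) c))" unfolding A_def dKr .
      then obtain b where "b \<in> B r" "drop (r * ?L) b = a" unfolding B_def by (rule comp_drop_surj[THEN bexE])
      then show "a \<in> drop (r * ?L) ` B r" by (rule rev_image_eqI[OF _ sym])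
    qed
  qed
  have injB: "inj_on (drop (r * ?L)) (B r)" for r
  proof (rule eq_card_imp_inj_on)
    show "finite (B r)" unfolding B_def by (rule comp_finite)
    show "card (drop (r * ?L) ` B r) = card (B r)" unfolding imB cardB ..
  qed
  define g where "g = (\<lambda>r. the_inv_into (B r) (drop (r * ?L)))"
  have gB: "g r a \<in> B r" if "a \<in> A" for r a
    unfolding g_def using that unfolding imB[symmetric, of r] by (rule the_inv_into_into[OF injB]) (rule order_refl)
  have dg: "drop (r * ?L) (g r a) = a" if "a \<in> A" for r a
    unfolding g_def using that unfolding imB[symmetric, of r] by (rule f_the_inv_into_f[OF injB])
  have gd: "g r (drop (r * ?L) b) = b" if "b \<in> B r" for r b
    unfolding g_def using that by (rule the_inv_into_f_f[OF injB])
  have stepB: "d1 s b \<in> B r" if "b \<in> B r" for r b s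
    using that unfolding B_def by (rule comp_step)
  define Dat where "Dat = (\<lambda>r. (\<lambda>a. if a \<in> A then (lt rho (g r a), \<lambda>s. drop (r * ?L) (d1 s (g r a))) else undefined))"
  define F where "F = (\<Pi>\<^sub>E a\<in>A. (UNIV :: ('s \<Rightarrow> 's) set) \<times> (\<Pi>\<^sub>E (s::'s)\<in>UNIV. A))"
  have finA: "finite A" unfolding A_def by (rule comp_finite)
  have finF: "finite F" unfolding F_def
  proof (rule finite_PiE[OF finA])
    fix a
    have "finite (\<Pi>\<^sub>E (s::'s)\<in>UNIV. A)" by (rule finite_PiE[OF finite_UNIV finA])
    then show "finite ((UNIV :: ('s \<Rightarrow> 's) set) \<times> (\<Pi>\<^sub>E (s::'s)\<in>UNIV. A))"
      by (rule finite_SigmaI[OF finite_UNIV])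
  qed
  have DatF: "Dat r \<in> F" for r
    unfolding F_def
  proof (rule PiE_I)
    fix a assume a: "a \<in> A"
    have "(\<lambda>s. drop (r * ?L) (d1 s (g r a))) \<in> (\<Pi>\<^sub>E (s::'s)\<in>UNIV. A)"
      using dropB[OF stepB[OF gB[OF a]]] by (simp add: PiE_def Pi_def)
    then show "Dat r a \<in> (UNIV :: ('s \<Rightarrow> 's) set) \<times> (\<Pi>\<^sub>E (s::'s)\<in>UNIV. A)"
      unfolding Dat_def using a by simp
  next
    fix a assume "a \<notin> A" then show "Dat r a = undefined" unfolding Dat_def by simp
  qed
  have "\<not> inj Dat"
  proof
    assume "inj Dat"
    moreover have "range Dat \<subseteq> F" using DatF by (rule image_subsetI)
    ultimately have "finite (UNIV :: nat set)" using finite_subset[OF _ finF] finite_imageD by blast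
    then show False by simp
  qed
  then obtain r1' r2' where r12': "r1' \<noteq> r2'" "Dat r1' = Dat r2'"
    unfolding inj_def by auto
  obtain r1 r2 where r12: "r1 < r2" "Dat r1 = Dat r2"
  proof (cases "r1' < r2'")
    case True then show ?thesis using that[of r1' r2'] r12'(2) by simp
  next
    case False then have "r2' < r1'" using r12'(1) by simp
    then show ?thesis using that[of r2' r1'] r12'(2) by simp
  qed
  have datA: "lt rho (g r1 a) = lt rho (g r2 a) \<and> (\<forall>s. drop (r1 * ?L) (d1 s (g r1 a)) = drop (r2 * ?L) (d1 s (g r2 a)))"
    if "a \<in> A" for a
  proof -
    have "Dat r1 a = Dat r2 a" using r12(2) by (rule fun_cong)
    then have "(lt rho (g r1 a), \<lambda>s. drop (r1 * ?L) (d1 s (g r1 a))) = (lt rho (g r2 a), \<lambda>s. drop (r2 * ?L) (d1 s (g r2 a)))"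
      using that unfolding Dat_def by simp
    then show ?thesis by (simp add: fun_eq_iff)
  qed
  have eqr: "\<forall>a. a \<in> A \<longrightarrow> rhoW delta rho (g r1 a) t = rhoW delta rho (g r2 a) t" for t
  proof (induct t)
    case Nil then show ?case by simp
  next
    case (Cons s t)
    show ?case
    proof (intro allI impI)
      fix a assume a: "a \<in> A"
      define a' where "a' = drop (r1 * ?L) (d1 s (g r1 a))"
      have a'2: "a' = drop (r2 * ?L) (d1 s (g r2 a))" using datA[OF a] unfolding a'_def by simp
      have a'A: "a' \<in> A" unfolding a'_def using dropB[OF stepB[OF gB[OF a]]] .
      have e1: "d1 s (g r1 a) = g r1 a'" unfolding a'_def using gd[OF stepB[OF gB[OF a]]] by simp
      have e2: "d1 s (g r2 a) = g r2 a'" unfolding a'2 using gd[OF stepB[OF gB[OF a]]] by simp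
      have l: "lt rho (g r1 a) s = lt rho (g r2 a) s" using datA[OF a] by simp
      have IH: "rhoW delta rho (g r1 a') t = rhoW delta rho (g r2 a') t" using Cons a'A by simp
      show "rhoW delta rho (g r1 a) (s # t) = rhoW delta rho (g r2 a) (s # t)"
        unfolding rhoW_Cons e1 e2 l IH ..
    qed
  qed
  have gK: "g r (cp K c) = cp (K + r) c" for r
  proof -
    have "cp (K + r) c \<in> B r" unfolding B_def by (rule comp_refl)
    then have "g r (drop (r * ?L) (cp (K + r) c)) = cp (K + r) c" by (rule gd)
    then show ?thesis unfolding dKr .
  qed
  have KA: "cp K c \<in> A" unfolding A_def by (rule comp_refl)
  have hK: "rhoW delta rho (cp (K + r1) c) t = rhoW delta rho (cp (K + r2) c) t" for t
  proof -
    have "rhoW delta rho (g r1 (cp K c)) t = rhoW delta rho (g r2 (cp K c)) t"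
      using eqr[of t] KA by simp
    then show ?thesis unfolding gK .
  qed
  have e12: "rhoW delta rho (cp r1 c) s = rhoW delta rho (cp r2 c) s" for s
  proof -
    obtain t where t: "rhoW delta rho (cp K c) t = s" using surj_rhoW[OF invt] by blast
    show ?thesis using hK[of t] unfolding cp_add rhoW_append t .
  qed
  define d where "d = r2 - r1"
  have r2d: "cp r2 c = cp r1 c @ cp d c"
  proof -
    have "r2 = r1 + d" unfolding d_def using r12(1) by simp
    then show ?thesis by (simp only: cp_add)
  qed
  have "rhoW delta rho (cp d c) t = t" for t
  proof -
    obtain s where s: "rhoW delta rho (cp r1 c) s = t" using surj_rhoW[OF invt] by blast
    show ?thesis using e12[of s] unfolding r2d rhoW_append s by simp
  qed
  moreover have "d > 0" unfolding d_def using r12(1) by simp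
  ultimately show ?thesis by blast
qed

end



locale jung = aut delta rho for delta :: "'s::finite \<Rightarrow> 'q::finite \<Rightarrow> 'q" and rho +
  fixes p :: "nat \<Rightarrow> 'q list set" and n :: nat
  assumes jp: "jungle_path delta rho p n"
begin

abbreviation "P \<equiv> p n"

lemma n_pos: "0 < n" using jp unfolding jungle_path_def by simp

lemma ip: "p 0 = cmp []" "\<And>j. j < n \<Longrightarrow> tree_edge delta rho (p j) (p (Suc j))"
  using jp unfolding jungle_path_def init_path_def by simp_all

lemma pj: "j \<le> n \<Longrightarrow> \<exists>w. length w = j \<and> p j = cmp w"
proof (induct j)
  case 0 then show ?case using ip(1) by (intro exI[of _ "[]"]) simp
next
  case (Suc j)
  then obtain w where w: "length w = j" "p j = cmp w" by (metis Suc_leD)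
  obtain u x where ux: "p j = cmp u" "p (Suc j) = cmp (u @ [x])"
    using ip(2)[of j] Suc(2) unfolding tree_edge_def by (metis Suc_le_lessD)
  have "u \<in> cmp w" using ux(1) w(2) comp_refl by metis
  then have "length u = j" using comp_length w(1) by simp
  then show ?case using ux(2) by (intro exI[of _ "u @ [x]"]) simp
qed

lemma p_len: "j \<le> n \<Longrightarrow> z \<in> p j \<Longrightarrow> length z = j"
  using pj comp_length by metis

lemma p_cmp: "j \<le> n \<Longrightarrow> z \<in> p j \<Longrightarrow> cmp z = p j"
  using pj comp_sym by metis

lemma p_take1: assumes "j < n" "z \<in> p (Suc j)" shows "take j z \<in> p j"
proof -
  obtain u x where ux: "p j = cmp u" "p (Suc j) = cmp (u @ [x])"
    using ip(2)[OF assms(1)] unfolding tree_edge_def by blast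
  have "length u = j" using p_len[of j u] ux(1) assms(1) comp_refl by simp
  have "take j z \<in> cmp (take j (u @ [x]))" using assms(2) unfolding ux(2) by (rule comp_take)
  moreover have "take j (u @ [x]) = u" using \<open>length u = j\<close> by simp
  ultimately show ?thesis using ux(1) by simp
qed

lemma p_take: assumes "k \<le> n" "z \<in> P" shows "take k z \<in> p k"
proof -
  have "m \<le> n \<Longrightarrow> take (n - m) z \<in> p (n - m)" for m
  proof (induct m)
    case 0 then show ?case using assms p_len[of n z] by simp
  next
    case (Suc m)
    have e: "n - m = Suc (n - Suc m)" using Suc(2) by simp
    have "take (n - Suc m) (take (n - m) z) \<in> p (n - Suc m)"
      using p_take1[of "n - Suc m" "take (n - m) z"] Suc e by simp
    then show ?case by simp
  qed
  from this[of "n - k"] assms(1) show ?thesis by simp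
qed

definition valid :: "'q list \<Rightarrow> bool" where
  "valid w \<longleftrightarrow> n \<le> length w \<and> (\<forall>i. i + n \<le> length w \<longrightarrow> take n (drop i w) \<in> P)"

lemma E_len:
  assumes "(P, C) \<in> {(A, B). tree_edge delta rho A B}\<^sup>*" "z \<in> C"
  shows "n \<le> length z"
  using assms
proof (induct arbitrary: z rule: rtrancl_induct)
  case base then show ?case using p_len[of n z] by simp
next
  case (step C D)
  then obtain u x where ux: "C = cmp u" "D = cmp (u @ [x])" unfolding tree_edge_def by blast
  have "n \<le> length u" using step(3)[of u] ux(1) comp_refl by simp
  moreover have "length z = length (u @ [x])" using step(4) ux(2) comp_length by simp
  ultimately show ?case by simp
qed

lemma window_eq: "i + l \<le> length w \<Longrightarrow> drop i (take (i + l) w) = take l (drop i w)"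
  by (simp add: drop_take)

end



context jung begin

lemma jw_prefix:
  assumes jw: "jungle_word delta rho p n w" and k: "k < n" "k < length w"
  shows "cmp (take (Suc k) w) = p (Suc k)"
proof -
  have "(cmp (take k w), cmp (take (Suc k) w)) \<in> jungle_edges delta rho p n"
    using jw k unfolding jungle_word_def by simp
  then consider (a) j where "j < n" "cmp (take k w) = p j" "cmp (take (Suc k) w) = p (Suc j)"
    | (b) "(P, cmp (take k w)) \<in> {(A, B). tree_edge delta rho A B}\<^sup>*"
    unfolding jungle_edges_def by blast
  then show ?thesis
  proof cases
    case (a j)
    have "take (Suc k) w \<in> p (Suc j)" using a(3) comp_refl by metis
    then have "length (take (Suc k) w) = Suc j" using a(1) by (intro p_len) simp_all
    then have "j = k" using k by simp
    then show ?thesis using a by simp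
  next
    case b
    have "n \<le> length (take k w)" using E_len[OF b comp_refl] .
    then show ?thesis using k by simp
  qed
qed

lemma jw_window:
  assumes jw: "jungle_word delta rho p n w" and k: "n \<le> k" "k < length w"
  shows "take n (drop (Suc k - n) w) \<in> P"
proof -
  have "(cmp (take k w), cmp (take (Suc k) w)) \<in> jungle_edges delta rho p n"
    using jw k unfolding jungle_word_def by simp
  then consider (a) j where "j < n" "cmp (take k w) = p j" "cmp (take (Suc k) w) = p (Suc j)"
    | (b) "liftable (cmp (take k w), cmp (take (Suc k) w)) (p (n - 1), P)"
    unfolding jungle_edges_def by blast
  then show ?thesis
  proof cases
    case (a j)
    have "take (Suc k) w \<in> p (Suc j)" using a(3) comp_refl by metis
    then have "length (take (Suc k) w) = Suc j" using a(1) by (intro p_len) simp_all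
    then show ?thesis using k a(1) by simp
  next
    case b
    have "\<forall>z\<in>cmp (take (Suc k) w). \<exists>a v. z = a @ v \<and> v \<in> P"
      using b unfolding liftable_def snd_conv .
    then obtain a v where av: "take (Suc k) w = a @ v" "v \<in> P"
      using comp_refl[of "take (Suc k) w"] by blast
    have lv: "length v = n" using p_len[of n v] av(2) by simp
    have lt: "length (take (Suc k) w) = Suc k" using k by simp
    have la: "length a = Suc k - n" using av(1) lt lv by (metis add_diff_cancel_right' length_append)
    have "v = drop (Suc k - n) (take (Suc k) w)" unfolding av(1) la[symmetric] by simp
    also have "\<dots> = take n (drop (Suc k - n) w)"
      using window_eq[of "Suc k - n" n w] k by simp
    finally show ?thesis using av(2) by simp
  qed
qed

lemma jw_valid:
  assumes jw: "jungle_word delta rho p n w" and l: "n \<le> length w"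
  shows "valid w"
  unfolding valid_def
proof (intro conjI allI impI)
  show "n \<le> length w" by (rule l)
  fix i assume i: "i + n \<le> length w"
  show "take n (drop i w) \<in> P"
  proof (cases i)
    case 0
    have "cmp (take (Suc (n - 1)) w) = p (Suc (n - 1))"
      using jw_prefix[OF jw, of "n - 1"] n_pos l by simp
    then have "cmp (take n w) = P" using n_pos by simp
    then have "take n w \<in> P" using comp_refl[of "take n w"] by simp
    then show ?thesis using 0 by simp
  next
    case (Suc i')
    have "take n (drop (Suc (i' + n) - n) w) \<in> P"
      using jw_window[OF jw, of "i' + n"] i Suc by simp
    then show ?thesis using Suc by simp
  qed
qed

lemma valid_len: "valid w \<Longrightarrow> n \<le> length w" unfolding valid_def by simp

lemma valid_win: "valid w \<Longrightarrow> i + n \<le> length w \<Longrightarrow> take n (drop i w) \<in> P"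
  unfolding valid_def by simp

lemma valid_take_prefix:
  assumes "valid w" "k \<le> n" shows "take k w \<in> p k"
proof -
  have tn: "take n w \<in> P" using valid_win[OF assms(1), of 0] valid_len[OF assms(1)] by simp
  have "take k (take n w) \<in> p k" by (rule p_take[OF assms(2) tn])
  moreover have "take k (take n w) = take k w" using assms(2) by (simp add: min.absorb1)
  ultimately show ?thesis by simp
qed

lemma tree_chain:
  assumes v: "valid w"
  shows "n \<le> k \<Longrightarrow> k \<le> length w \<Longrightarrow> (P, cmp (take k w)) \<in> {(A, B). tree_edge delta rho A B}\<^sup>*"
proof (induct k rule: dec_induct)
  case base
  have "cmp (take n w) = P" using p_cmp valid_take_prefix[OF v order_refl] by simp
  then show ?case by simp
next
  case (step k)
  have "take (Suc k) w = take k w @ [w ! k]" using step(2,4) by (simp add: take_Suc_conv_app_nth)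
  then have "tree_edge delta rho (cmp (take k w)) (cmp (take (Suc k) w))"
    unfolding tree_edge_def by metis
  then show ?case using step(3,4) by (simp add: rtrancl.rtrancl_into_rtrancl)
qed

lemma valid_jw:
  assumes v: "valid w"
  shows "jungle_word delta rho p n w"
  unfolding jungle_word_def
proof (intro allI impI)
  fix k assume k: "k < length w"
  show "(cmp (take k w), cmp (take (Suc k) w)) \<in> jungle_edges delta rho p n"
  proof (cases "k < n")
    case True
    have "cmp (take k w) = p k" using p_cmp valid_take_prefix[OF v] True by simp
    moreover have "cmp (take (Suc k) w) = p (Suc k)" using p_cmp valid_take_prefix[OF v] True by simp
    ultimately show ?thesis unfolding jungle_edges_def using True by blast
  next
    case False
    have te: "tree_edge delta rho (cmp (take k w)) (cmp (take (Suc k) w))"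
    proof -
      have "take (Suc k) w = take k w @ [w ! k]" using k by (simp add: take_Suc_conv_app_nth)
      then show ?thesis unfolding tree_edge_def by metis
    qed
    have ch: "(P, cmp (take k w)) \<in> {(A, B). tree_edge delta rho A B}\<^sup>*"
      using tree_chain[OF v] False k by simp
    have li: "liftable (cmp (take k w), cmp (take (Suc k) w)) (p (n - 1), P)"
      unfolding liftable_def snd_conv
    proof
      fix z assume z: "z \<in> cmp (take (Suc k) w)"
      let ?i = "Suc k - n"
      have "drop ?i z \<in> cmp (drop ?i (take (Suc k) w))" using z by (rule comp_drop)
      moreover have "drop ?i (take (Suc k) w) = take n (drop ?i w)"
        using window_eq[of ?i n w] False k by simp
      moreover have "take n (drop ?i w) \<in> P" using valid_win[OF v, of ?i] False k by simp
      ultimately have "drop ?i z \<in> P" using p_cmp[of n "take n (drop ?i w)"] by simp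
      then show "\<exists>a v. z = a @ v \<and> v \<in> P" by (metis append_take_drop_id)
    qed
    show ?thesis unfolding jungle_edges_def using te ch li by blast
  qed
qed

lemma valid_drop: "valid w \<Longrightarrow> q + n \<le> length w \<Longrightarrow> valid (drop q w)"
  unfolding valid_def by (simp add: add.assoc[symmetric] add.commute[of _ q])

lemma valid_P: "y \<in> P \<Longrightarrow> valid y"
  unfolding valid_def using p_len[of n y] by simp

lemma glue:
  assumes a: "valid A" and b: "valid B" and e: "drop (length A - n) A = take n B"
  shows "valid (A @ drop n B)" "take n (A @ drop n B) = take n A"
    "drop (length (A @ drop n B) - n) (A @ drop n B) = drop (length B - n) B"
proof -
  define A0 where "A0 = take (length A - n) A"
  have lA: "n \<le> length A" using valid_len[OF a] .
  have lB: "n \<le> length B" using valid_len[OF b] .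
  have AA: "A = A0 @ take n B" unfolding A0_def using e[symmetric] by simp
  have X: "A @ drop n B = A0 @ B" unfolding AA by simp
  have lA0: "length A0 = length A - n" unfolding A0_def using lA by simp
  show "valid (A @ drop n B)" unfolding X valid_def
  proof (intro conjI allI impI)
    show "n \<le> length (A0 @ B)" using lB by simp
    fix i assume i: "i + n \<le> length (A0 @ B)"
    show "take n (drop i (A0 @ B)) \<in> P"
    proof (cases "i \<le> length A0")
      case True
      have "take n (drop i (A0 @ B)) = take n (drop i A)"
        unfolding AA using True lB by simp
      moreover have "i + n \<le> length A" using True lA0 lA by simp
      ultimately show ?thesis using valid_win[OF a] by simp
    next
      case False
      have "take n (drop i (A0 @ B)) = take n (drop (i - length A0) B)" using False by simp
      moreover have "(i - length A0) + n \<le> length B" using False i by simp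
      ultimately show ?thesis using valid_win[OF b] by simp
    qed
  qed
  show "take n (A @ drop n B) = take n A" using lA by simp
  show "drop (length (A @ drop n B) - n) (A @ drop n B) = drop (length B - n) B"
    unfolding X using lB by simp
qed

end



context jung begin

definition W :: "'q list set" where
  "W = {w. length w = Suc n \<and> take n w \<in> P \<and> drop 1 w \<in> P}"

definition E :: "('q list \<times> 'q list) set" where
  "E = {(take n w, drop 1 w) | w. w \<in> W}"

lemma finW: "finite W"
proof -
  have "W \<subseteq> {w. set w \<subseteq> UNIV \<and> length w = Suc n}"
  proof
    fix w assume "w \<in> W" then have "length w = Suc n" unfolding W_def by simp
    then show "w \<in> {w. set w \<subseteq> UNIV \<and> length w = Suc n}" by simp
  qed
  then show ?thesis using finite_lists_length_eq[of "UNIV :: 'q set"] by (rule finite_subset) simp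
qed

lemma finP: "finite P"
proof -
  obtain w where "P = cmp w" using pj[of n] by blast
  then show ?thesis using comp_finite by simp
qed

lemma P_cmp_take: "w \<in> W \<Longrightarrow> cmp (take n w) = P"
  unfolding W_def using p_cmp[of n] by simp

lemma P_cmp_drop: "w \<in> W \<Longrightarrow> cmp (drop 1 w) = P"
  unfolding W_def using p_cmp[of n] by simp

lemma W_len: "w \<in> W \<Longrightarrow> length w = Suc n" unfolding W_def by simp

lemma cmpW: assumes "w \<in> W" "z \<in> cmp w" shows "z \<in> W"
proof -
  have "take n z \<in> cmp (take n w)" using assms(2) by (rule comp_take)
  moreover have "drop 1 z \<in> cmp (drop 1 w)" using assms(2) by (rule comp_drop)
  moreover have "length z = Suc n" using comp_length[OF assms(2)] W_len[OF assms(1)] by simp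
  ultimately show ?thesis unfolding W_def using P_cmp_take[OF assms(1)] P_cmp_drop[OF assms(1)] by simp
qed

lemma W_legit: assumes w: "w \<in> W" shows "legit_child delta rho (p (n - 1), P) (P, cmp w)"
  unfolding legit_child_def fst_conv snd_conv
proof (intro conjI)
  have "w = take n w @ [w ! n]" using W_len[OF w]
    by (metis lessI take_Suc_conv_app_nth take_all order_refl)
  then show "tree_edge delta rho P (cmp w)"
    unfolding tree_edge_def using P_cmp_take[OF w] by metis
  show "P = P" ..
  show "liftable (P, cmp w) (p (n - 1), P)"
    unfolding liftable_def snd_conv
  proof
    fix z assume "z \<in> cmp w"
    then have "drop 1 z \<in> P" using comp_drop P_cmp_drop[OF w] by metis
    then show "\<exists>a v. z = a @ v \<and> v \<in> P" by (metis append_take_drop_id)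
  qed
qed

lemma W_card: assumes w: "w \<in> W" shows "card (cmp w) = card P"
proof -
  have "\<forall>f. legit_child delta rho (p (n - 1), P) f \<longrightarrow> label f = 1"
    using jp unfolding jungle_path_def Let_def by simp
  then have "label (P, cmp w) = 1" using W_legit[OF w] by simp
  moreover have "card P > 0" using P_cmp_take[OF w] comp_card_pos by metis
  ultimately show ?thesis by (rule label_one)
qed

lemma W_take_im: assumes w: "w \<in> W" shows "take n ` cmp w = P"
proof
  show "take n ` cmp w \<subseteq> P" using comp_take P_cmp_take[OF w] by blast
  show "P \<subseteq> take n ` cmp w"
  proof
    fix y assume "y \<in> P"
    then have "y \<in> cmp (take n w)" using P_cmp_take[OF w] by simp
    then obtain b where "b \<in> cmp w" "take n b = y" by (rule comp_take_surj[THEN bexE])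
    then show "y \<in> take n ` cmp w" by (rule rev_image_eqI[OF _ sym])
  qed
qed

lemma W_drop_im: assumes w: "w \<in> W" shows "drop 1 ` cmp w = P"
proof
  show "drop 1 ` cmp w \<subseteq> P" using comp_drop P_cmp_drop[OF w] by blast
  show "P \<subseteq> drop 1 ` cmp w"
  proof
    fix y assume "y \<in> P"
    then have "y \<in> cmp (drop 1 w)" using P_cmp_drop[OF w] by simp
    then obtain b where "b \<in> cmp w" "drop 1 b = y" by (rule comp_drop_surj[THEN bexE])
    then show "y \<in> drop 1 ` cmp w" by (rule rev_image_eqI[OF _ sym])
  qed
qed

lemma W_take_inj: assumes w: "w \<in> W" shows "inj_on (take n) (cmp w)"
  by (rule eq_card_imp_inj_on[OF comp_finite]) (simp only: W_take_im[OF w] W_card[OF w])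

lemma W_drop_inj: assumes w: "w \<in> W" shows "inj_on (drop 1) (cmp w)"
  by (rule eq_card_imp_inj_on[OF comp_finite]) (simp only: W_drop_im[OF w] W_card[OF w])

definition Out :: "'q list \<Rightarrow> 'q list set" where "Out y = {w \<in> W. take n w = y}"
definition In :: "'q list \<Rightarrow> 'q list set" where "In y = {w \<in> W. drop 1 w = y}"

lemma out_le_in: assumes y: "y \<in> P" and y': "y' \<in> P" shows "card (Out y) \<le> card (In y')"
proof -
  define f where "f = (\<lambda>w. SOME z. z \<in> cmp w \<and> drop 1 z = y')"
  have fP: "f w \<in> cmp w \<and> drop 1 (f w) = y'" if "w \<in> W" for w
  proof -
    have "y' \<in> drop 1 ` cmp w" using W_drop_im[OF that] y' by simp
    then have "\<exists>z. z \<in> cmp w \<and> drop 1 z = y'" by blast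
    then show ?thesis unfolding f_def by (rule someI_ex)
  qed
  show ?thesis
  proof (rule card_inj_on_le)
    show "inj_on f (Out y)"
    proof (rule inj_onI)
      fix w1 w2 assume w1: "w1 \<in> Out y" and w2: "w2 \<in> Out y" and eq: "f w1 = f w2"
      have W1: "w1 \<in> W" and W2: "w2 \<in> W" using w1 w2 unfolding Out_def by simp_all
      have "cmp w1 = cmp w2" using fP[OF W1] fP[OF W2] eq comp_same by metis
      then have "w2 \<in> cmp w1" using comp_refl by metis
      moreover have "take n w1 = take n w2" using w1 w2 unfolding Out_def by simp
      ultimately show "w1 = w2" using inj_onD[OF W_take_inj[OF W1]] comp_refl by metis
    qed
    show "f ` Out y \<subseteq> In y'"
    proof
      fix z assume "z \<in> f ` Out y"
      then obtain w where w: "w \<in> Out y" "z = f w" by blast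
      have Ww: "w \<in> W" using w(1) unfolding Out_def by simp
      show "z \<in> In y'" unfolding In_def using fP[OF Ww] cmpW[OF Ww] w(2) by simp
    qed
    show "finite (In y')" unfolding In_def using finW by simp
  qed
qed

lemma in_le_out: assumes y: "y \<in> P" and y': "y' \<in> P" shows "card (In y') \<le> card (Out y)"
proof -
  define f where "f = (\<lambda>w. SOME z. z \<in> cmp w \<and> take n z = y)"
  have fP: "f w \<in> cmp w \<and> take n (f w) = y" if "w \<in> W" for w
  proof -
    have "y \<in> take n ` cmp w" using W_take_im[OF that] y by simp
    then have "\<exists>z. z \<in> cmp w \<and> take n z = y" by blast
    then show ?thesis unfolding f_def by (rule someI_ex)
  qed
  show ?thesis
  proof (rule card_inj_on_le)
    show "inj_on f (In y')"
    proof (rule inj_onI)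
      fix w1 w2 assume w1: "w1 \<in> In y'" and w2: "w2 \<in> In y'" and eq: "f w1 = f w2"
      have W1: "w1 \<in> W" and W2: "w2 \<in> W" using w1 w2 unfolding In_def by simp_all
      have "cmp w1 = cmp w2" using fP[OF W1] fP[OF W2] eq comp_same by metis
      then have "w2 \<in> cmp w1" using comp_refl by metis
      moreover have "drop 1 w1 = drop 1 w2" using w1 w2 unfolding In_def by simp
      ultimately show "w1 = w2" using inj_onD[OF W_drop_inj[OF W1]] comp_refl by metis
    qed
    show "f ` In y' \<subseteq> Out y"
    proof
      fix z assume "z \<in> f ` In y'"
      then obtain w where w: "w \<in> In y'" "z = f w" by blast
      have Ww: "w \<in> W" using w(1) unfolding In_def by simp
      show "z \<in> Out y" unfolding Out_def using fP[OF Ww] cmpW[OF Ww] w(2) by simp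
    qed
    show "finite (Out y)" unfolding Out_def using finW by simp
  qed
qed

lemma in_eq_out: "y \<in> P \<Longrightarrow> y' \<in> P \<Longrightarrow> card (In y') = card (Out y)"
  using in_le_out out_le_in by (simp add: dual_order.antisym)

end



context jung begin

lemma card_fibers:
  assumes "finite R" "finite A"
  shows "card {w \<in> A. f w \<in> R} = (\<Sum>y\<in>R. card {w \<in> A. f w = y})"
proof -
  have "{w \<in> A. f w \<in> R} = (\<Union>y\<in>R. {w \<in> A. f w = y})" by blast
  moreover have "card (\<Union>y\<in>R. {w \<in> A. f w = y}) = (\<Sum>y\<in>R. card {w \<in> A. f w = y})"
    by (rule card_UN_disjoint) (use assms in auto)
  ultimately show ?thesis by simp
qed

lemma closure_back:
  assumes R: "R \<subseteq> P" and fw: "\<forall>w\<in>W. take n w \<in> R \<longrightarrow> drop 1 w \<in> R"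
    and w: "w \<in> W" and d: "drop 1 w \<in> R"
  shows "take n w \<in> R"
proof -
  let ?X = "{w \<in> W. take n w \<in> R}" and ?Y = "{w \<in> W. drop 1 w \<in> R}"
  have finR: "finite R" using finP R finite_subset by blast
  have sub: "?X \<subseteq> ?Y" using fw by blast
  have "card ?X = (\<Sum>y\<in>R. card (Out y))" unfolding Out_def by (rule card_fibers[OF finR finW])
  also have "\<dots> = (\<Sum>y\<in>R. card (In y))"
  proof (rule sum.cong[OF refl])
    fix y assume "y \<in> R" then have "y \<in> P" using R by blast
    then show "card (Out y) = card (In y)" using in_eq_out by simp
  qed
  also have "\<dots> = card ?Y" unfolding In_def by (rule card_fibers[OF finR finW, symmetric])
  finally have "card ?X = card ?Y" .
  moreover have "finite ?Y" using finW by simp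
  ultimately have "?X = ?Y" using sub card_subset_eq by blast
  then show ?thesis using w d by blast
qed

lemma E_P: "(y, z) \<in> E \<Longrightarrow> y \<in> P \<and> z \<in> P"
  unfolding E_def W_def by blast

lemma Estar_P: "(y, z) \<in> E\<^sup>* \<Longrightarrow> y \<in> P \<Longrightarrow> z \<in> P"
  by (induct rule: rtrancl_induct) (simp_all add: E_P)

lemma back_reach:
  assumes u: "u \<in> P" and uv: "(u, v) \<in> E\<^sup>*"
  shows "(v, u) \<in> E\<^sup>*"
proof -
  define R where "R = {y \<in> P. (v, y) \<in> E\<^sup>*}"
  have RP: "R \<subseteq> P" unfolding R_def by blast
  have fw: "\<forall>w\<in>W. take n w \<in> R \<longrightarrow> drop 1 w \<in> R"
  proof (intro ballI impI)
    fix w assume w: "w \<in> W" and t: "take n w \<in> R"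
    have "(take n w, drop 1 w) \<in> E" unfolding E_def using w by blast
    moreover have "(v, take n w) \<in> E\<^sup>*" using t unfolding R_def by simp
    ultimately have "(v, drop 1 w) \<in> E\<^sup>*" by (rule rtrancl.rtrancl_into_rtrancl[rotated])
    moreover have "drop 1 w \<in> P" using w unfolding W_def by simp
    ultimately show "drop 1 w \<in> R" unfolding R_def by simp
  qed
  have vP: "v \<in> P" using Estar_P[OF uv u] .
  have "u \<in> R" using uv
  proof (induct rule: converse_rtrancl_induct)
    case base then show ?case unfolding R_def using vP by simp
  next
    case (step y z)
    then obtain w where w: "w \<in> W" "y = take n w" "z = drop 1 w" unfolding E_def by blast
    then show ?case using closure_back[OF RP fw w(1)] step(3) by simp
  qed
  then show ?thesis unfolding R_def by simp
qed

lemma walk: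
  assumes v: "valid w"
  shows "(take n w, drop (length w - n) w) \<in> E\<^sup>*"
proof -
  have "n \<le> m \<Longrightarrow> m \<le> length w \<Longrightarrow> (take n w, take n (drop (m - n) w)) \<in> E\<^sup>*" for m
  proof (induct m rule: dec_induct)
    case base then show ?case by simp
  next
    case (step m)
    define w0 where "w0 = take (Suc n) (drop (m - n) w)"
    have l0: "length w0 = Suc n" unfolding w0_def using step(1,2,4) by simp
    have t0: "take n w0 = take n (drop (m - n) w)" unfolding w0_def by (simp add: min.absorb1)
    have d0: "drop 1 w0 = take n (drop (Suc m - n) w)"
      unfolding w0_def using step(1) by (simp add: drop_take Suc_diff_le)
    have "w0 \<in> W" unfolding W_def using l0 t0 d0 valid_win[OF v, of "m - n"] valid_win[OF v, of "Suc m - n"]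
      step(1,2,4) by simp
    then have "(take n w0, drop 1 w0) \<in> E" unfolding E_def by blast
    then have ed: "(take n (drop (m - n) w), take n (drop (Suc m - n) w)) \<in> E" using t0 d0 by simp
    have IH: "(take n w, take n (drop (m - n) w)) \<in> E\<^sup>*" using step(3) step(4) by simp
    show ?case by (rule rtrancl.rtrancl_into_rtrancl[OF IH ed])
  qed
  from this[of "length w"] valid_len[OF v] show ?thesis by simp
qed

lemma walk_back:
  assumes "(y, z) \<in> E\<^sup>*" "y \<in> P"
  shows "\<exists>w. valid w \<and> take n w = y \<and> drop (length w - n) w = z"
  using assms
proof (induct rule: rtrancl_induct)
  case base
  have "length y = n" using p_len[of n y] base by simp
  then show ?case using valid_P[OF base] by (intro exI[of _ y]) simp
next
  case (step z z')
  then obtain w where w: "valid w" "take n w = y" "drop (length w - n) w = z" by blast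
  obtain w0 where w0: "w0 \<in> W" "z = take n w0" "z' = drop 1 w0" using step(2) unfolding E_def by blast
  have W0: "length w0 = Suc n" "take n w0 \<in> P" "drop 1 w0 \<in> P" using w0(1) unfolding W_def by simp_all
  have v0: "valid w0" unfolding valid_def
  proof (intro conjI allI impI)
    show "n \<le> length w0" using W0(1) by simp
    fix i assume i: "i + n \<le> length w0"
    then have "i \<le> 1" using W0(1) by simp
    then have "i = 0 \<or> i = 1" by linarith
    then show "take n (drop i w0) \<in> P"
    proof
      assume "i = 0" then show ?thesis using W0(2) by simp
    next
      assume "i = 1" then show ?thesis using W0(1,3) by simp
    qed
  qed
  have e: "drop (length w - n) w = take n w0" using w(3) w0(2) by simp
  note g = glue[OF w(1) v0 e]
  have "drop (length w0 - n) w0 = z'" using w0(3) W_len[OF w0(1)] by simp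
  then show ?case using g w(2) by (intro exI[of _ "w @ drop n w0"]) simp
qed

lemma out_nonempty: assumes u: "u \<in> P" shows "\<exists>w\<in>W. take n w = u"
proof -
  have "\<exists>f g. f \<noteq> g \<and> legit_child delta rho (p (n - 1), P) f \<and> legit_child delta rho (p (n - 1), P) g"
    using jp unfolding jungle_path_def Let_def by simp
  then obtain f where f: "legit_child delta rho (p (n - 1), P) f" by blast
  then have lc: "tree_edge delta rho (fst f) (snd f) \<and> fst f = P \<and> liftable f (p (n - 1), P)"
    unfolding legit_child_def snd_conv .
  have te0: "tree_edge delta rho (fst f) (snd f)" and fP: "fst f = P" and li: "liftable f (p (n - 1), P)"
    using lc by (rule conjunct1, rule conjunct1[OF conjunct2], rule conjunct2[OF conjunct2])
  from te0 have te: "tree_edge delta rho P (snd f)" unfolding fP .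
  obtain u0 x where ux: "P = cmp u0" "snd f = cmp (u0 @ [x])" using te unfolding tree_edge_def by blast
  have u0P: "u0 \<in> P" using ux(1) comp_refl by simp
  have "\<forall>z\<in>snd f. \<exists>a v. z = a @ v \<and> v \<in> P" using li unfolding liftable_def by simp
  then obtain a v where av: "u0 @ [x] = a @ v" "v \<in> P" using ux(2) comp_refl by blast
  have lu0: "length u0 = n" using p_len[of n u0] u0P by simp
  have lv: "length v = n" using p_len[of n v] av(2) by simp
  have la: "length a = 1" using av(1) lu0 lv by (metis add_diff_cancel_right' length_append length_append_singleton plus_1_eq_Suc)
  have "drop 1 (u0 @ [x]) = v" using av(1) la by (metis append_eq_conv_conj)
  then have w0: "u0 @ [x] \<in> W" unfolding W_def using lu0 u0P av(2) by simp
  have "card (Out u0) > 0"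
  proof -
    have "u0 @ [x] \<in> Out u0" unfolding Out_def using w0 lu0 by simp
    moreover have "finite (Out u0)" unfolding Out_def using finW by simp
    ultimately show ?thesis using card_gt_0_iff by blast
  qed
  then have "card (Out u) > 0" using in_eq_out[OF u u0P] in_eq_out[OF u0P u0P] by simp
  then have "Out u \<noteq> {}" by auto
  then show ?thesis unfolding Out_def by blast
qed

end



context jung begin

lemma W_valid: assumes "w \<in> W" shows "valid w"
proof -
  have W0: "length w = Suc n" "take n w \<in> P" "drop 1 w \<in> P" using assms unfolding W_def by simp_all
  show "valid w" unfolding valid_def
  proof (intro conjI allI impI)
    show "n \<le> length w" using W0(1) by simp
    fix i assume i: "i + n \<le> length w"
    then have "i \<le> 1" using W0(1) by simp
    then have "i = 0 \<or> i = 1" by linarith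
    then show "take n (drop i w) \<in> P"
    proof
      assume "i = 0" then show ?thesis using W0(2) by simp
    next
      assume "i = 1" then show ?thesis using W0(1,3) by simp
    qed
  qed
qed

lemma cyc:
  assumes v: "valid X" and l: "2 * n \<le> length X" and t: "take n X = u"
    and e: "drop (length X - n) X = u"
  defines "c \<equiv> take (length X - n) X"
  shows "c \<noteq> []" "take n c = u" "X = c @ u" "valid (cp (Suc k) c @ u)"
proof -
  have lc: "length c = length X - n" unfolding c_def by simp
  have nc: "n \<le> length c" using lc l by simp
  show "c \<noteq> []" using nc n_pos by auto
  show tc: "take n c = u" unfolding c_def using t nc lc by (simp add: min.absorb1)
  show Xc: "X = c @ u" unfolding c_def using e by (metis append_take_drop_id)
  show "valid (cp (Suc k) c @ u)"
  proof (induct k)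
    case 0 then show ?case using v Xc by (simp add: cp_Suc)
  next
    case (Suc k)
    let ?B = "cp (Suc k) c @ u"
    have tB: "take n ?B = u" using tc nc by (simp add: cp_Suc)
    have eA: "drop (length X - n) X = take n ?B" using e tB by simp
    have g: "valid (X @ drop n ?B)" by (rule glue(1)[OF v Suc eA])
    have "?B = u @ drop n ?B" using tB by (metis append_take_drop_id)
    then have "X @ drop n ?B = c @ ?B" unfolding Xc by (metis append_assoc)
    then show ?case using g by (simp add: cp_Suc)
  qed
qed

lemma pump:
  assumes u: "u \<in> P"
  shows "\<exists>X. valid X \<and> take n X = u \<and> drop (length X - n) X = u \<and> n + m \<le> length X"
proof -
  obtain w0 where w0: "w0 \<in> W" "take n w0 = u" using out_nonempty[OF u] by blast
  let ?y = "drop 1 w0"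
  have yP: "?y \<in> P" using w0(1) unfolding W_def by simp
  have "(u, ?y) \<in> E" unfolding E_def using w0 by blast
  then have "(?y, u) \<in> E\<^sup>*" using back_reach[OF u r_into_rtrancl] by simp
  then obtain w1 where w1: "valid w1" "take n w1 = ?y" "drop (length w1 - n) w1 = u"
    using walk_back[OF _ yP] by blast
  have e0: "drop (length w0 - n) w0 = take n w1" using w1(2) W_len[OF w0(1)] by simp
  note g1 = glue[OF W_valid[OF w0(1)] w1(1) e0]
  define X1 where "X1 = w0 @ drop n w1"
  have X1: "valid X1" "take n X1 = u" "drop (length X1 - n) X1 = u"
    using g1 w0(2) w1(3) unfolding X1_def by simp_all
  have lX1: "length X1 \<ge> Suc n" unfolding X1_def using W_len[OF w0(1)] by simp
  show ?thesis
  proof (induct m)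
    case 0
    have "length u = n" using p_len[of n u] u by simp
    then show ?case using valid_P[OF u] by (intro exI[of _ u]) simp
  next
    case (Suc m)
    then obtain X where X: "valid X" "take n X = u" "drop (length X - n) X = u" "n + m \<le> length X" by blast
    have e: "drop (length X - n) X = take n X1" using X(3) X1(2) by simp
    note g = glue[OF X(1) X1(1) e]
    have "length (X @ drop n X1) \<ge> n + Suc m" using X(4) lX1 by simp
    then show ?case using g X(2) X1(3) X(4) valid_len[OF X(1)] by (intro exI[of _ "X @ drop n X1"]) simp
  qed
qed

lemma sim_refl:
  assumes noact: "no_active_self_liftable_branch delta rho" and u: "u \<in> P"
  shows "jungle_sim delta rho p n u u"
proof -
  obtain X where X: "valid X" "take n X = u" "drop (length X - n) X = u" "n + n \<le> length X"
    using pump[OF u, of n] by blast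
  define c where "c = take (length X - n) X"
  have l2: "2 * n \<le> length X" using X(4) by simp
  note cy = cyc[OF X(1) l2 X(2) X(3), folded c_def]
  obtain d where d: "d > 0" "\<forall>t. rhoW delta rho (cp d c) t = t" using per[OF noact cy(1)] by blast
  obtain d' where d': "d = Suc d'" using d(1) gr0_implies_Suc by blast
  define s where "s = drop n c @ cp d' c"
  have us: "u @ s = cp d c" unfolding s_def d' cp_Suc using cy(2) by (metis append_assoc append_take_drop_id)
  have "valid (cp d c @ u)" unfolding d' by (rule cy(4))
  then have "jungle_word delta rho p n (u @ s @ u)" using valid_jw us by (metis append_assoc)
  then show ?thesis unfolding jungle_sim_def using d(2) us by metis
qed

lemma take_mc: assumes "take n c = u" "length u = n" shows "take n (m @ c) = take n (m @ u)"
proof -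
  have "take (n - length m) c = take (n - length m) u"
    using assms by (metis min.absorb1 diff_le_self take_take)
  then show ?thesis by simp
qed

lemma sim_sym:
  assumes noact: "no_active_self_liftable_branch delta rho" and u: "u \<in> P" and v: "v \<in> P"
    and uv: "jungle_sim delta rho p n u v"
  shows "jungle_sim delta rho p n v u"
proof -
  obtain s where s: "jungle_word delta rho p n (u @ s @ v)" "\<forall>t. rhoW delta rho (u @ s) t = t"
    using uv unfolding jungle_sim_def by blast
  have lu: "length u = n" using p_len[of n u] u by simp
  have lv: "length v = n" using p_len[of n v] v by simp
  have vA: "valid (u @ s @ v)" using jw_valid[OF s(1)] lv by simp
  have "(take n (u @ s @ v), drop (length (u @ s @ v) - n) (u @ s @ v)) \<in> E\<^sup>*" by (rule walk[OF vA])
  then have "(u, v) \<in> E\<^sup>*" using lu lv by simp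
  then have "(v, u) \<in> E\<^sup>*" using back_reach[OF u] by simp
  then obtain w2 where w2: "valid w2" "take n w2 = v" "drop (length w2 - n) w2 = u"
    using walk_back[OF _ v] by blast
  have lw2: "n \<le> length w2" using valid_len[OF w2(1)] .
  have e: "drop (length (u @ s @ v) - n) (u @ s @ v) = take n w2" using w2(2) lv by simp
  note g = glue[OF vA w2(1) e]
  define X where "X = (u @ s) @ w2"
  have XX: "(u @ s @ v) @ drop n w2 = X" unfolding X_def using w2(2) by (metis append_assoc append_take_drop_id)
  have X: "valid X" "take n X = u" "drop (length X - n) X = u" "2 * n \<le> length X"
    using g w2(3) lu lw2 unfolding XX by (simp_all add: X_def)
  define c where "c = take (length X - n) X"
  note cy = cyc[OF X(1) X(4) X(2) X(3), folded c_def]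
  define q where "q = length (u @ s)"
  define m where "m = take (length w2 - n) w2"
  have cq: "c = (u @ s) @ m" unfolding c_def m_def X_def using lw2 lu by simp
  have w2m: "w2 = m @ u" using cy(3) unfolding cq X_def by simp
  obtain d where d: "d > 0" "\<forall>t. rhoW delta rho (cp d c) t = t" using per[OF noact cy(1)] by blast
  define D1 where "D1 = d + d - 1"
  have D: "d + d = Suc D1" unfolding D1_def using d(1) by simp
  have idD: "rhoW delta rho (cp (Suc D1) c) t = t" for t
    unfolding D[symmetric] cp_add rhoW_append using d(2) by simp
  define Y where "Y = m @ cp D1 c"
  have cpD: "cp (Suc D1) c = (u @ s) @ Y" unfolding Y_def cp_Suc cq by simp
  have idY: "rhoW delta rho Y t = t" for t
    using idD[of t] s(2) unfolding cpD rhoW_append by simp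
  obtain D2 where D2: "D1 = Suc D2" using D d(1) by (cases D1) auto
  have lc: "n \<le> length c" using cy(2) lu by (metis length_take min.bounded_iff order_refl nat_le_linear min_def)
  have "take n Y = take n (m @ c)" unfolding Y_def D2 cp_Suc using lc by (simp add: take_append)
  also have "\<dots> = take n (m @ u)" by (rule take_mc[OF cy(2) lu])
  also have "\<dots> = v" using w2(2) w2m by simp
  finally have tY: "take n Y = v" .
  have vv: "valid (cp (Suc D1) c @ u)" by (rule cy(4))
  have "q + n \<le> length (cp (Suc D1) c @ u)" unfolding cpD q_def using lu by simp
  then have "valid (drop q (cp (Suc D1) c @ u))" by (rule valid_drop[OF vv])
  then have vY: "valid (Y @ u)" unfolding cpD q_def by simp
  define t where "t = drop n Y"
  have vt: "v @ t = Y" unfolding t_def using tY by (metis append_take_drop_id)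
  have "jungle_word delta rho p n (v @ t @ u)" using valid_jw[OF vY] vt by (metis append_assoc)
  then show ?thesis unfolding jungle_sim_def using idY vt by metis
qed

lemma sim_trans:
  assumes u: "u \<in> P" and v: "v \<in> P" and w: "w \<in> P"
    and uv: "jungle_sim delta rho p n u v" and vw: "jungle_sim delta rho p n v w"
  shows "jungle_sim delta rho p n u w"
proof -
  obtain s where s: "jungle_word delta rho p n (u @ s @ v)" "\<forall>t. rhoW delta rho (u @ s) t = t"
    using uv unfolding jungle_sim_def by blast
  obtain t where t: "jungle_word delta rho p n (v @ t @ w)" "\<forall>x. rhoW delta rho (v @ t) x = x"
    using vw unfolding jungle_sim_def by blast
  have lu: "length u = n" using p_len[of n u] u by simp
  have lv: "length v = n" using p_len[of n v] v by simp
  have lw: "length w = n" using p_len[of n w] w by simp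
  have vA: "valid (u @ s @ v)" using jw_valid[OF s(1)] lv by simp
  have vB: "valid (v @ t @ w)" using jw_valid[OF t(1)] lw by simp
  have e: "drop (length (u @ s @ v) - n) (u @ s @ v) = take n (v @ t @ w)" using lv by simp
  have "valid ((u @ s @ v) @ drop n (v @ t @ w))" by (rule glue(1)[OF vA vB e])
  then have "valid (u @ (s @ v @ t) @ w)" using lv by simp
  then have "jungle_word delta rho p n (u @ (s @ v @ t) @ w)" by (rule valid_jw)
  moreover have "rhoW delta rho (u @ (s @ v @ t)) x = x" for x
  proof -
    have "rhoW delta rho (u @ (s @ v @ t)) x = rhoW delta rho (v @ t) (rhoW delta rho (u @ s) x)"
      by (metis append_assoc rhoW_append)
    then show ?thesis using s(2) t(2) by simp
  qed
  ultimately show ?thesis unfolding jungle_sim_def by blast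
qed

end

theorem lemma5p10:
  fixes delta :: "'s::finite \<Rightarrow> 'q::finite \<Rightarrow> 'q"
    and rho :: "'q \<Rightarrow> 's \<Rightarrow> 's"
    and p :: "nat \<Rightarrow> 'q list set" and n :: nat
  assumes "bireversible delta rho"
    and "connected_aut delta rho"
    and "no_active_self_liftable_branch delta rho"
    and "jungle_path delta rho p n"
  shows "equiv (stems p n)
           {(u, v). u \<in> stems p n \<and> v \<in> stems p n \<and> jungle_sim delta rho p n u v}"
proof -
  have i: "\<forall>x. bij (rho x)" and r: "\<forall>i. bij (delta i)"
    using assms(1) unfolding bireversible_def invertible_def reversible_def by simp_all
  interpret J: jung delta rho p n
    by (unfold_locales) (simp_all add: i r assms(4))
  show ?thesis unfolding stems_def
  proof (rule equivI)
    show "{(u, v). u \<in> p n \<and> v \<in> p n \<and> jungle_sim delta rho p n u v} \<subseteq> p n \<times> p n" by blast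
    show "refl_on (p n) {(u, v). u \<in> p n \<and> v \<in> p n \<and> jungle_sim delta rho p n u v}"
      by (rule refl_onI) (auto intro: J.sim_refl[OF assms(3)])
    show "sym {(u, v). u \<in> p n \<and> v \<in> p n \<and> jungle_sim delta rho p n u v}"
      by (rule symI) (auto intro: J.sim_sym[OF assms(3)])
    show "trans {(u, v). u \<in> p n \<and> v \<in> p n \<and> jungle_sim delta rho p n u v}"
      by (rule transI) (auto intro: J.sim_trans)
  qed
qed



end
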